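(* Let $p$ be a prime and $n\geq1$. Then $$I_{p^n}=\bigcap_{i=0}^{p^n-1}(p^n,X-i)=\bigcap_{j=0}^{p-1}\mathcal{Q}_{n,j}=\prod_{j=0}^{p-1}\mathcal{Q}_{n,j},$$ where each $\mathcal{Q}_{n,j}$ is $\mathcal{M}_j$-primary, and the middle expression is the minimal primary decomposition of $I_{p^n}$ (its associated primes being exactly the maximal ideals $\mathcal{M}_0,\dots,\mathcal{M}_{p-1}$).
   Context: For a prime $p$ and $n\geq1$, $I_{p^n}=p^n\mathrm{Int}(\mathbb{Z})\cap\mathbb{Z}[X]$, where $\mathrm{Int}(\mathbb{Z})=\{f\in\mathbb{Q}[X]: f(\mathbb{Z})\subseteq\mathbb{Z}\}$; equivalently $I_{p^n}=\{f\in\mathbb{Z}[X] : p^n\mid f(a)\text{ for all }a\in\mathbb{Z}\}$. For $j\in\{0,\dots,p-1\}$, $\mathcal{M}_j=(p,X-j)\subseteq\mathbb{Z}[X]$ and $\mathcal{Q}_{n,j}=\bigcap_{i\in\{0,\dots,p^n-1\},\ i\equiv j \ (\mathrm{mod}\ p)}(p^n,X-i)$, i.e. the set of $f\in\mathbb{Z}[X]$ with $p^n\mid f(i)$ for all integers $i\equiv j\pmod p$. *)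

theory Defs
  imports "HOL-Computational_Algebra.Computational_Algebra"
begin

definition is_ideal :: "'a::comm_ring_1 set \<Rightarrow> bool" where
  "is_ideal I \<longleftrightarrow> 0 \<in> I \<and> (\<forall>a\<in>I. \<forall>b\<in>I. a + b \<in> I) \<and> (\<forall>r. \<forall>a\<in>I. r * a \<in> I)"

definition gen_ideal :: "'a::comm_ring_1 set \<Rightarrow> 'a set" where
  "gen_ideal S = {x. \<exists>F c. finite F \<and> F \<subseteq> S \<and> x = (\<Sum>s\<in>F. c s * s)}"

definition ideal_prod :: "'a::comm_ring_1 set \<Rightarrow> 'a set \<Rightarrow> 'a set" where
  "ideal_prod I J = gen_ideal {a * b | a b. a \<in> I \<and> b \<in> J}"

fun ideal_prod_upto :: "(nat \<Rightarrow> 'a::comm_ring_1 set) \<Rightarrow> nat \<Rightarrow> 'a set" where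
  "ideal_prod_upto Q 0 = UNIV"
| "ideal_prod_upto Q (Suc k) = ideal_prod (ideal_prod_upto Q k) (Q k)"

definition radical :: "'a::comm_ring_1 set \<Rightarrow> 'a set" where
  "radical I = {x. \<exists>k. x ^ k \<in> I}"

definition prime_ideal :: "'a::comm_ring_1 set \<Rightarrow> bool" where
  "prime_ideal P \<longleftrightarrow> is_ideal P \<and> P \<noteq> UNIV \<and> (\<forall>a b. a * b \<in> P \<longrightarrow> a \<in> P \<or> b \<in> P)"

definition maximal_ideal :: "'a::comm_ring_1 set \<Rightarrow> bool" where
  "maximal_ideal M \<longleftrightarrow> is_ideal M \<and> M \<noteq> UNIV \<and>
     (\<forall>J. is_ideal J \<and> M \<subseteq> J \<longrightarrow> J = M \<or> J = UNIV)"

definition primary_ideal :: "'a::comm_ring_1 set \<Rightarrow> bool" where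
  "primary_ideal Q \<longleftrightarrow> is_ideal Q \<and> Q \<noteq> UNIV \<and>
     (\<forall>a b. a * b \<in> Q \<longrightarrow> a \<in> Q \<or> (\<exists>k. b ^ k \<in> Q))"

definition primary_for :: "'a::comm_ring_1 set \<Rightarrow> 'a set \<Rightarrow> bool" where
  "primary_for Q P \<longleftrightarrow> primary_ideal Q \<and> radical Q = P"

definition minimal_primary_decomposition :: "'a::comm_ring_1 set \<Rightarrow> ('b \<Rightarrow> 'a set) \<Rightarrow> 'b set \<Rightarrow> bool" where
  "minimal_primary_decomposition I Q A \<longleftrightarrow>
     finite A \<and> I = (\<Inter>j\<in>A. Q j) \<and> (\<forall>j\<in>A. primary_ideal (Q j)) \<and>
     (\<forall>j\<in>A. \<forall>k\<in>A. j \<noteq> k \<longrightarrow> radical (Q j) \<noteq> radical (Q k)) \<and>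
     (\<forall>j\<in>A. \<not> (\<Inter>k\<in>A - {j}. Q k) \<subseteq> Q j)"

definition IntZ :: "rat poly set" where
  "IntZ = {f. \<forall>a::int. poly f (of_int a) \<in> \<int>}"

text \<open>\<open>I_{p^n} = p^n Int(Z) \<inter> Z[X]\<close>, with \<open>Z[X]\<close> embedded in \<open>Q[X]\<close>.\<close>
definition I_pn :: "nat \<Rightarrow> nat \<Rightarrow> int poly set" where
  "I_pn p n = {f. map_poly of_int f \<in> (\<lambda>g. smult (of_nat (p ^ n)) g) ` IntZ}"

definition ideal2 :: "int \<Rightarrow> int \<Rightarrow> int poly set" where
  "ideal2 m i = gen_ideal {[:m:], [:-i, 1:]}"

definition M_id :: "nat \<Rightarrow> nat \<Rightarrow> int poly set" where
  "M_id p j = ideal2 (int p) (int j)"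

definition Q_id :: "nat \<Rightarrow> nat \<Rightarrow> nat \<Rightarrow> int poly set" where
  "Q_id p n j = (\<Inter>i\<in>{i. i < p ^ n \<and> i mod p = j mod p}. ideal2 (int (p ^ n)) (int i))"

end

theory Submission
  imports Defs "HOL-Number_Theory.Cong"
begin

lemma ideal_sum:
  assumes "is_ideal K" "finite F" "F \<subseteq> K"
  shows "(\<Sum>s\<in>F. c s * s) \<in> K"
  using assms(2,3)
proof (induction F rule: finite_induct)
  case empty then show ?case using assms(1) by (simp add: is_ideal_def)
next
  case (insert x F)
  then show ?case using assms(1) by (simp add: is_ideal_def)
qed

lemma gen_ideal_subset: "S \<subseteq> gen_ideal S"
proof
  fix x assume "x \<in> S"
  then show "x \<in> gen_ideal S" unfolding gen_ideal_def
    by (intro CollectI exI[of _ "{x}"] exI[of _ "\<lambda>_. 1"]) auto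
qed

lemma sum_extend:
  fixes c :: "'a \<Rightarrow> 'a::comm_ring_1"
  assumes "finite F" "finite G"
  shows "(\<Sum>s\<in>F. c s * s) = (\<Sum>s\<in>F \<union> G. (if s \<in> F then c s else 0) * s)"
  apply (rule sum.mono_neutral_cong_left)
  using assms apply simp_all
  done

lemma sum_extend2:
  fixes c :: "'a \<Rightarrow> 'a::comm_ring_1"
  assumes "finite F" "finite G"
  shows "(\<Sum>s\<in>G. c s * s) = (\<Sum>s\<in>F \<union> G. (if s \<in> G then c s else 0) * s)"
  apply (rule sum.mono_neutral_cong_left)
  using assms apply simp_all
  done

lemma gen_ideal_add:
  assumes "x \<in> gen_ideal S" "y \<in> gen_ideal S"
  shows "x + y \<in> gen_ideal S"
proof -
  have "\<exists>F c. finite F \<and> F \<subseteq> S \<and> x = (\<Sum>s\<in>F. c s * s)"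
    using assms(1) by (simp add: gen_ideal_def)
  then obtain F c where F: "finite F" "F \<subseteq> S" "x = (\<Sum>s\<in>F. c s * s)"
    by (elim exE conjE)
  have "\<exists>F c. finite F \<and> F \<subseteq> S \<and> y = (\<Sum>s\<in>F. c s * s)"
    using assms(2) by (simp add: gen_ideal_def)
  then obtain G d where G: "finite G" "G \<subseteq> S" "y = (\<Sum>s\<in>G. d s * s)"
    by (elim exE conjE)
  define e where "e s = (if s \<in> F then c s else 0) + (if s \<in> G then d s else 0)" for s
  have "x = (\<Sum>s\<in>F \<union> G. (if s \<in> F then c s else 0) * s)"
    unfolding F(3) by (rule sum_extend[OF F(1) G(1)])
  moreover have "y = (\<Sum>s\<in>F \<union> G. (if s \<in> G then d s else 0) * s)"
    unfolding G(3) by (rule sum_extend2[OF F(1) G(1)])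
  ultimately have "x + y = (\<Sum>s\<in>F \<union> G. (if s \<in> F then c s else 0) * s + (if s \<in> G then d s else 0) * s)"
    by (simp only: sum.distrib[symmetric])
  also have "\<dots> = (\<Sum>s\<in>F \<union> G. e s * s)"
    unfolding e_def by (simp only: distrib_right)
  finally have "x + y = (\<Sum>s\<in>F \<union> G. e s * s)" .
  moreover have "finite (F \<union> G)" "F \<union> G \<subseteq> S" using F G by auto
  ultimately show ?thesis unfolding gen_ideal_def
    by (intro CollectI exI[of _ "F \<union> G"] exI[of _ e]) simp
qed

lemma gen_ideal_least:
  assumes "is_ideal K" "S \<subseteq> K" shows "gen_ideal S \<subseteq> K"
proof
  fix x assume "x \<in> gen_ideal S"
  then have "\<exists>F c. finite F \<and> F \<subseteq> S \<and> x = (\<Sum>s\<in>F. c s * s)"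
    by (simp add: gen_ideal_def)
  then obtain F c where F: "finite F" "F \<subseteq> S" "x = (\<Sum>s\<in>F. c s * s)"
    by (elim exE conjE)
  show "x \<in> K" unfolding F(3) by (rule ideal_sum[OF assms(1) F(1)]) (rule subset_trans[OF F(2) assms(2)])
qed

lemma is_ideal_Inter:
  assumes "\<And>x. x \<in> A \<Longrightarrow> is_ideal (Q x)"
  shows "is_ideal (\<Inter>x\<in>A. Q x)"
  unfolding is_ideal_def
proof (intro conjI ballI allI)
  show "0 \<in> (\<Inter>x\<in>A. Q x)" using assms by (simp add: is_ideal_def)
next
  fix a b assume "a \<in> (\<Inter>x\<in>A. Q x)" "b \<in> (\<Inter>x\<in>A. Q x)"
  then show "a + b \<in> (\<Inter>x\<in>A. Q x)" using assms by (simp add: is_ideal_def)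
next
  fix r a assume "a \<in> (\<Inter>x\<in>A. Q x)"
  then show "r * a \<in> (\<Inter>x\<in>A. Q x)" using assms by (simp add: is_ideal_def)
qed

lemma is_ideal_Int: "is_ideal I \<Longrightarrow> is_ideal J \<Longrightarrow> is_ideal (I \<inter> J)"
  unfolding is_ideal_def by simp

lemma ideal_prod_comax:
  assumes I: "is_ideal I" and J: "is_ideal J" and a: "a \<in> I" and b: "b \<in> J"
    and ab: "a + b = 1"
  shows "ideal_prod I J = I \<inter> J"
proof
  show "ideal_prod I J \<subseteq> I \<inter> J"
    unfolding ideal_prod_def
  proof (rule gen_ideal_least[OF is_ideal_Int[OF I J]])
    show "{a * b |a b. a \<in> I \<and> b \<in> J} \<subseteq> I \<inter> J"
    proof
      fix z assume "z \<in> {a * b |a b. a \<in> I \<and> b \<in> J}"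
      then obtain u v where z: "z = u * v" "u \<in> I" "v \<in> J" by blast
      have "v * u \<in> I" using I z(2) unfolding is_ideal_def by blast
      moreover have "u * v \<in> J" using J z(3) unfolding is_ideal_def by blast
      ultimately show "z \<in> I \<inter> J" using z(1) by (simp add: mult.commute)
    qed
  qed
next
  show "I \<inter> J \<subseteq> ideal_prod I J"
  proof
    fix x assume x: "x \<in> I \<inter> J"
    have "x = x * (a + b)" using ab by simp
    also have "\<dots> = a * x + x * b" by (simp add: algebra_simps)
    finally have "x = a * x + x * b" .
    moreover have h1: "a * x \<in> ideal_prod I J" "x * b \<in> ideal_prod I J"
      unfolding ideal_prod_def using x a b by (auto intro!: subsetD[OF gen_ideal_subset])
    have "a * x + x * b \<in> ideal_prod I J" unfolding ideal_prod_def
      by (rule gen_ideal_add) (use h1 in \<open>simp_all add: ideal_prod_def\<close>)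
    ultimately show "x \<in> ideal_prod I J" by simp
  qed
qed

lemma ideal2_iff: "f \<in> ideal2 m i \<longleftrightarrow> m dvd poly f i"
proof
  assume "f \<in> ideal2 m i"
  then have "\<exists>F c. finite F \<and> F \<subseteq> {[:m:], [:-i, 1:]} \<and> f = (\<Sum>s\<in>F. c s * s)"
    unfolding ideal2_def gen_ideal_def by simp
  then obtain F c where F: "finite F" "F \<subseteq> {[:m:], [:-i, 1:]}" "f = (\<Sum>s\<in>F. c s * s)"
    by (elim exE conjE)
  have "poly f i = (\<Sum>s\<in>F. poly (c s) i * poly s i)" using F(3) by (simp add: poly_sum)
  also have "m dvd \<dots>"
    by (rule dvd_sum) (use F(2) in auto)
  finally show "m dvd poly f i" .
next
  assume "m dvd poly f i"
  then obtain k where k: "poly f i = m * k" by blast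
  have ne: "[:m:] \<noteq> [:-i, 1:]" by simp
  define c where "c s = (if s = [:m:] then [:k:] else synthetic_div f i)" for s
  have s1: "(\<Sum>s\<in>{[:m:], [:-i, 1:]}. c s * s) = c [:m:] * [:m:] + c [:-i, 1:] * [:-i, 1:]"
    using ne by simp
  have s2: "c [:m:] * [:m:] = [:poly f i:]" by (simp add: c_def k mult.commute)
  have s3: "c [:-i, 1:] * [:-i, 1:] = [:-i, 1:] * synthetic_div f i"
    using ne by (simp add: c_def mult.commute)
  have "f = [:-i, 1:] * synthetic_div f i + [:poly f i:]" by (simp only: synthetic_div_correct')
  also have "\<dots> = (\<Sum>s\<in>{[:m:], [:-i, 1:]}. c s * s)"
    unfolding s1 s2 s3 by (rule add.commute)
  finally have fe: "f = (\<Sum>s\<in>{[:m:], [:-i, 1:]}. c s * s)" .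
  show "f \<in> ideal2 m i" unfolding ideal2_def gen_ideal_def
    by (rule CollectI, rule exI[of _ "{[:m:], [:-i, 1:]}"], rule exI[of _ c]) (use fe in simp)
qed

lemma M_iff: "f \<in> M_id p j \<longleftrightarrow> int p dvd poly f (int j)"
  by (simp add: M_id_def ideal2_iff)

lemma Q_iff: "f \<in> Q_id p n j \<longleftrightarrow> (\<forall>i. i < p ^ n \<longrightarrow> i mod p = j mod p \<longrightarrow> int (p ^ n) dvd poly f (int i))"
  by (auto simp: Q_id_def ideal2_iff)

lemma is_ideal_ideal2: "is_ideal (ideal2 m i)"
  by (simp add: is_ideal_def ideal2_iff dvd_add)

lemma poly_cong: "[x = y] (mod m) \<Longrightarrow> [poly f x = poly f (y::int)] (mod m)"
  by (induction f) (auto intro: cong_add cong_mult)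

lemma poly_mapint: "poly (map_poly (of_int::int\<Rightarrow>rat) f) (of_int a) = of_int (poly f a)"
  by (induction f) (auto simp: map_poly_pCons)

lemma I_pn_iff:
  assumes "p > 0"
  shows "f \<in> I_pn p n \<longleftrightarrow> (\<forall>a::int. int (p ^ n) dvd poly f a)"
proof
  assume "f \<in> I_pn p n"
  then obtain g where g: "g \<in> IntZ" "map_poly of_int f = smult (of_nat (p ^ n)) g"
    unfolding I_pn_def by auto
  show "\<forall>a::int. int (p ^ n) dvd poly f a"
  proof
    fix a :: int
    have "poly g (of_int a) \<in> \<int>" using g(1) unfolding IntZ_def by simp
    then obtain z where z: "poly g (of_int a) = of_int z" by (elim Ints_cases)
    have "(of_int (poly f a) :: rat) = poly (map_poly of_int f) (of_int a)"
      by (simp add: poly_mapint)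
    also have "\<dots> = of_nat (p ^ n) * of_int z" using g(2) z by simp
    also have "\<dots> = of_int (int (p ^ n) * z)" by simp
    finally have "poly f a = int (p ^ n) * z" by (simp only: of_int_eq_iff)
    then show "int (p ^ n) dvd poly f a" by simp
  qed
next
  assume H: "\<forall>a::int. int (p ^ n) dvd poly f a"
  define c :: rat where "c = of_nat (p ^ n)"
  have c0: "c \<noteq> 0" using assms by (simp add: c_def)
  define g where "g = smult (1 / c) (map_poly of_int f)"
  have "g \<in> IntZ" unfolding IntZ_def
  proof (intro CollectI allI)
    fix a :: int
    obtain z where z: "poly f a = int (p ^ n) * z" using H by (meson dvdE)
    have "poly g (of_int a) = (1 / c) * of_int (poly f a)"
      by (simp add: g_def poly_mapint)
    also have "\<dots> = of_int z" using c0 by (simp add: z c_def)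
    finally show "poly g (of_int a) \<in> \<int>" by simp
  qed
  moreover have "map_poly of_int f = smult c g" using c0 by (simp add: g_def)
  ultimately show "f \<in> I_pn p n" unfolding I_pn_def c_def by blast
qed

lemma all_iff_lt:
  assumes "m > 0"
  shows "(\<forall>a::int. int m dvd poly f a) \<longleftrightarrow> (\<forall>i<m. int m dvd poly f (int i))"
proof
  assume H: "\<forall>i<m. int m dvd poly f (int i)"
  show "\<forall>a::int. int m dvd poly f a"
  proof
    fix a :: int
    define i where "i = nat (a mod int m)"
    have ii: "int i = a mod int m" using assms by (simp add: i_def)
    have "i < m" using assms ii by (metis of_nat_0_less_iff of_nat_less_iff pos_mod_bound)
    then have "int m dvd poly f (int i)" using H by blast
    moreover have "[poly f a = poly f (int i)] (mod int m)"
      by (rule poly_cong) (simp add: ii cong_def)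
    ultimately show "int m dvd poly f a" by (simp add: cong_dvd_iff)
  qed
qed simp

lemma ideal_add: "is_ideal I \<Longrightarrow> a \<in> I \<Longrightarrow> b \<in> I \<Longrightarrow> a + b \<in> I"
  unfolding is_ideal_def by simp
lemma ideal_mult: "is_ideal I \<Longrightarrow> a \<in> I \<Longrightarrow> r * a \<in> I"
  unfolding is_ideal_def by simp

lemma cong_p_dvd:
  assumes "(i::nat) mod p = j mod p" "int p dvd poly f (int j)"
  shows "int p dvd poly f (int i)"
proof -
  have "[int i = int j] (mod int p)" using assms(1)
    by (metis cong_def cong_int_iff)
  then have "[poly f (int i) = poly f (int j)] (mod int p)" by (rule poly_cong)
  then show ?thesis using assms(2) by (simp add: cong_dvd_iff)
qed

lemma Q_pow:
  assumes "x \<in> M_id p j" "j < p"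
  shows "x ^ n \<in> Q_id p n j"
  unfolding Q_iff
proof (intro allI impI)
  fix i assume "i < p ^ n" "i mod p = j mod p"
  then have "int p dvd poly x (int i)" using assms cong_p_dvd unfolding M_iff by blast
  then have "int p ^ n dvd poly x (int i) ^ n" by (rule dvd_power_same)
  then show "int (p ^ n) dvd poly (x ^ n) (int i)" by (simp add: poly_power)
qed

lemma radical_Q:
  assumes "prime p" "n \<ge> 1" "j < p"
  shows "radical (Q_id p n j) = M_id p j"
proof
  show "M_id p j \<subseteq> radical (Q_id p n j)"
  proof
    fix x assume "x \<in> M_id p j"
    then have "x ^ n \<in> Q_id p n j" using Q_pow assms(3) by simp
    then show "x \<in> radical (Q_id p n j)" unfolding radical_def by auto
  qed
next
  show "radical (Q_id p n j) \<subseteq> M_id p j"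
  proof
    fix x assume "x \<in> radical (Q_id p n j)"
    then obtain k where k: "x ^ k \<in> Q_id p n j" unfolding radical_def by blast
    have p1: "p > 1" using assms(1) prime_gt_1_nat by blast
    have "p ^ 1 \<le> p ^ n" by (rule power_increasing) (use assms p1 in auto)
    then have "j < p ^ n" using assms(3) by simp
    then have d: "int (p ^ n) dvd poly x (int j) ^ k" using k assms(3)
      unfolding Q_iff by (simp add: poly_power)
    have pd: "int p dvd int (p ^ n)" using assms(2) by (cases n) auto
    show "x \<in> M_id p j"
    proof (cases "k = 0")
      case True
      then have "int (p ^ n) dvd 1" using d by simp
      then have "int (p ^ n) \<le> 1" by (rule zdvd_imp_le) simp
      then have "p ^ n \<le> 1" by (metis of_nat_1 of_nat_le_iff)
      then show ?thesis using p1 \<open>p ^ 1 \<le> p ^ n\<close> by simp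
    next
      case False
      have "int p dvd poly x (int j) ^ k" using pd d by (rule dvd_trans)
      moreover have "prime (int p)" using assms(1) by simp
      ultimately have "int p dvd poly x (int j)" using prime_dvd_power by metis
      then show ?thesis unfolding M_iff .
    qed
  qed
qed

lemma is_ideal_Q: "is_ideal (Q_id p n j)"
  unfolding Q_id_def by (rule is_ideal_Inter) (rule is_ideal_ideal2)

lemma is_ideal_M: "is_ideal (M_id p j)"
  unfolding M_id_def by (rule is_ideal_ideal2)

lemma primary_Q:
  assumes "prime p" "n \<ge> 1" "j < p"
  shows "primary_for (Q_id p n j) (M_id p j)"
  unfolding primary_for_def
proof (intro conjI)
  show "radical (Q_id p n j) = M_id p j" using radical_Q assms by blast
  have p1: "p > 1" using assms(1) prime_gt_1_nat by blast
  have "p ^ 1 \<le> p ^ n" by (rule power_increasing) (use assms p1 in auto)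
  then have jlt: "j < p ^ n" using assms(3) by simp
  have "1 \<notin> Q_id p n j"
  proof
    assume "1 \<in> Q_id p n j"
    then have "int (p ^ n) dvd 1" using jlt assms(3) unfolding Q_iff by auto
    then have "int (p ^ n) \<le> 1" by (rule zdvd_imp_le) simp
    then have "p ^ n \<le> 1" by (metis of_nat_1 of_nat_le_iff)
    then show False using p1 \<open>p ^ 1 \<le> p ^ n\<close> by simp
  qed
  then have ne: "Q_id p n j \<noteq> UNIV" by blast
  show "primary_ideal (Q_id p n j)"
    unfolding primary_ideal_def
  proof (intro conjI allI impI is_ideal_Q ne)
    fix a b assume ab: "a * b \<in> Q_id p n j"
    show "a \<in> Q_id p n j \<or> (\<exists>k. b ^ k \<in> Q_id p n j)"
    proof (cases "b \<in> M_id p j")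
      case True
      then show ?thesis using Q_pow assms(3) by blast
    next
      case False
      have "a \<in> Q_id p n j" unfolding Q_iff
      proof (intro allI impI)
        fix i assume i: "i < p ^ n" "i mod p = j mod p"
        have "\<not> int p dvd poly b (int i)"
        proof
          assume "int p dvd poly b (int i)"
          then have "int p dvd poly b (int j)"
            using cong_p_dvd[of j p i] i(2) by simp
          then show False using False unfolding M_iff by blast
        qed
        then have "coprime (int p) (poly b (int i))"
          using assms(1) by (simp add: prime_imp_coprime)
        then have cop: "coprime (int (p ^ n)) (poly b (int i))"
          by (simp add: coprime_power_left_iff)
        have "int (p ^ n) dvd poly a (int i) * poly b (int i)"
          using ab i unfolding Q_iff by simp
        then show "int (p ^ n) dvd poly a (int i)"
          using cop coprime_dvd_mult_left_iff by blast
      qed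
      then show ?thesis by blast
    qed
  qed
qed

lemma maximal_M:
  assumes "prime p"
  shows "maximal_ideal (M_id p j)"
  unfolding maximal_ideal_def
proof (intro conjI allI impI is_ideal_M)
  have p1: "p > 1" using assms(1) prime_gt_1_nat by blast
  have "1 \<notin> M_id p j" unfolding M_iff using p1 by simp
  then show "M_id p j \<noteq> UNIV" by blast
next
  fix J assume J: "is_ideal J \<and> M_id p j \<subseteq> J"
  show "J = M_id p j \<or> J = UNIV"
  proof (cases "J \<subseteq> M_id p j")
    case True then show ?thesis using J by blast
  next
    case False
    then obtain g where g: "g \<in> J" "g \<notin> M_id p j" by blast
    define c where "c = poly g (int j)"
    have "g - [:c:] \<in> M_id p j" unfolding M_iff by (simp add: c_def)
    then have h1: "g - [:c:] \<in> J" using J by blast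
    have "g + (-1) * (g - [:c:]) \<in> J" using J g(1) h1 by (simp only: ideal_add ideal_mult)
    moreover have "g + (-1) * (g - [:c:]) = [:c:]" by simp
    ultimately have cJ: "[:c:] \<in> J" by simp
    have "[:int p:] \<in> M_id p j" unfolding M_iff by simp
    then have pJ: "[:int p:] \<in> J" using J by blast
    have "\<not> int p dvd c" using g(2) unfolding M_iff c_def by blast
    then have "coprime (int p) c" using assms by (simp add: prime_imp_coprime)
    then have "gcd (int p) c = 1" by simp
    then obtain u v where uv: "u * int p + v * c = 1" using bezout_int by metis
    have "[:u:] * [:int p:] + [:v:] * [:c:] \<in> J"
      using J ideal_add[OF _ ideal_mult[OF _ pJ] ideal_mult[OF _ cJ]] by blast
    moreover have "[:u:] * [:int p:] + [:v:] * [:c:] = (1::int poly)"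
      using uv by (simp add: one_pCons mult.commute)
    ultimately have oneJ: "1 \<in> J" by simp
    have "J = UNIV"
    proof (rule sym, rule UNIV_eq_I)
      fix r :: "int poly"
      have "r * 1 \<in> J" using J ideal_mult[OF _ oneJ] by blast
      then show "r \<in> J" by simp
    qed
    then show ?thesis by blast
  qed
qed

definition Pk :: "nat \<Rightarrow> nat \<Rightarrow> int poly" where
  "Pk p k = (\<Prod>t\<in>{0..<p}-{k}. [:- int t, 1:])"

lemma poly_Pk: "poly (Pk p k) x = (\<Prod>t\<in>{0..<p}-{k}. x - int t)"
  unfolding Pk_def by (simp add: poly_prod)

lemma P_dvd:
  assumes "p > 0" "i mod p \<noteq> k"
  shows "int p dvd poly (Pk p k) (int i)"
proof -
  have t: "i mod p \<in> {0..<p}-{k}" using assms by simp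
  have "i = p * (i div p) + i mod p" by simp
  then have "int i = int p * int (i div p) + int (i mod p)" by (metis of_nat_add of_nat_mult)
  then have d1: "int p dvd int i - int (i mod p)" by simp
  have "int i - int (i mod p) dvd (\<Prod>t\<in>{0..<p}-{k}. int i - int t)"
    by (rule dvd_prodI) (use t in auto)
  then show ?thesis unfolding poly_Pk using d1 dvd_trans by blast
qed

lemma P_ndvd:
  assumes "prime p" "k < p"
  shows "\<not> int p dvd poly (Pk p k) (int k)"
proof
  assume H: "int p dvd poly (Pk p k) (int k)"
  have ip: "prime (int p)" using assms(1) by simp
  have "\<exists>t\<in>{0..<p}-{k}. int p dvd int k - int t"
    using prime_dvd_prod_iff[of "{0..<p}-{k}" "int p" "\<lambda>t. int k - int t"] H ip
    unfolding poly_Pk by simp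
  then obtain t where t: "t \<in> {0..<p}-{k}" "int p dvd int k - int t" by (elim bexE) simp
  then have "[int k = int t] (mod int p)" by (simp add: cong_iff_dvd_diff)
  then have "[k = t] (mod p)" by (simp add: cong_int_iff)
  then have "k mod p = t mod p" by (simp add: cong_def)
  then show False using t assms(2) by auto
qed

lemma h_in_Q:
  assumes "prime p" "j < p" "k < p" "j \<noteq> k"
  shows "Pk p k ^ n \<in> Q_id p n j"
  unfolding Q_iff
proof (intro allI impI)
  fix i assume i: "i < p ^ n" "i mod p = j mod p"
  have "i mod p \<noteq> k" using i(2) assms by simp
  then have "int p dvd poly (Pk p k) (int i)" using P_dvd assms(1) prime_gt_0_nat by blast
  then have "int p ^ n dvd poly (Pk p k) (int i) ^ n" by (rule dvd_power_same)
  then show "int (p ^ n) dvd poly (Pk p k ^ n) (int i)" by (simp add: poly_power)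
qed

lemma h_notin_Q:
  assumes "prime p" "n \<ge> 1" "k < p"
  shows "Pk p k ^ n \<notin> Q_id p n k"
proof
  assume "Pk p k ^ n \<in> Q_id p n k"
  have p1: "p > 1" using assms(1) prime_gt_1_nat by blast
  have "p ^ 1 \<le> p ^ n" by (rule power_increasing) (use assms p1 in auto)
  then have klt: "k < p ^ n" using assms(3) by simp
  have "int (p ^ n) dvd poly (Pk p k) (int k) ^ n"
    using \<open>Pk p k ^ n \<in> Q_id p n k\<close> klt assms(3) unfolding Q_iff by (simp add: poly_power)
  moreover have "int p dvd int (p ^ n)" using assms(2) by (cases n) auto
  ultimately have "int p dvd poly (Pk p k) (int k) ^ n" by (rule dvd_trans[rotated])
  moreover have "prime (int p)" using assms(1) by simp
  ultimately have "int p dvd poly (Pk p k) (int k)" using prime_dvd_power by metis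
  then show False using P_ndvd assms by blast
qed

lemma comax:
  assumes "prime p" "n \<ge> 1" "k < p"
  shows "\<exists>a b. a \<in> (\<Inter>j\<in>{..<k}. Q_id p n j) \<and> b \<in> Q_id p n k \<and> a + b = 1"
proof -
  define h where "h = Pk p k ^ n"
  define u where "u = poly h (int k)"
  have "\<not> int p dvd poly (Pk p k) (int k)" using P_ndvd assms by blast
  moreover have "prime (int p)" using assms(1) by simp
  ultimately have "\<not> int p dvd u" unfolding u_def h_def poly_power
    using prime_dvd_power by metis
  then have "coprime (int p) u" using \<open>prime (int p)\<close> by (simp add: prime_imp_coprime)
  then have "gcd (int p) u = 1" by simp
  then obtain c v where cv: "c * int p + v * u = 1" using bezout_int by metis
  define G where "G = [:v:] * h"
  define m where "m = 1 - G"
  have "poly m (int k) = c * int p" unfolding m_def G_def using cv by (simp add: u_def)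
  then have "m \<in> M_id p k" unfolding M_iff by simp
  then have bQ: "m ^ n \<in> Q_id p n k" using Q_pow assms(3) by blast
  define S where "S = (\<Sum>i<n. m ^ (n - Suc i) * 1 ^ i)"
  have "1 ^ n - m ^ n = (1 - m) * S" unfolding S_def by (rule power_diff_sumr2)
  then have eq: "G * S + m ^ n = 1" unfolding m_def by simp
  have "G * S \<in> (\<Inter>j\<in>{..<k}. Q_id p n j)"
  proof
    fix j assume "j \<in> {..<k}"
    then have "j < p" "j \<noteq> k" using assms(3) by auto
    then have "h \<in> Q_id p n j" unfolding h_def using h_in_Q assms by blast
    then have "(S * [:v:]) * h \<in> Q_id p n j" by (rule ideal_mult[OF is_ideal_Q])
    then show "G * S \<in> Q_id p n j" unfolding G_def by (simp add: ac_simps)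
  qed
  then show ?thesis using bQ eq by blast
qed

lemma prod_upto:
  assumes "prime p" "n \<ge> 1"
  shows "k \<le> p \<Longrightarrow> ideal_prod_upto (Q_id p n) k = (\<Inter>j\<in>{..<k}. Q_id p n j)"
proof (induction k)
  case 0
  then show ?case by simp
next
  case (Suc k)
  then have kp: "k < p" by simp
  obtain a b where ab: "a \<in> (\<Inter>j\<in>{..<k}. Q_id p n j)" "b \<in> Q_id p n k" "a + b = 1"
    using comax[OF assms kp] by blast
  have "ideal_prod_upto (Q_id p n) (Suc k) = ideal_prod (\<Inter>j\<in>{..<k}. Q_id p n j) (Q_id p n k)"
    using Suc kp by simp
  also have "\<dots> = (\<Inter>j\<in>{..<k}. Q_id p n j) \<inter> Q_id p n k"
    by (rule ideal_prod_comax[OF is_ideal_Inter[OF is_ideal_Q] is_ideal_Q ab])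
  also have "\<dots> = (\<Inter>j\<in>{..<Suc k}. Q_id p n j)"
    by (simp add: lessThan_Suc Int_commute)
  finally show ?case .
qed

theorem mainTheorem8:
  fixes p n :: nat
  assumes "prime p" and "n \<ge> 1"
  shows "I_pn p n = (\<Inter>i\<in>{0..<p ^ n}. ideal2 (int (p ^ n)) (int i))
       \<and> I_pn p n = (\<Inter>j\<in>{0..<p}. Q_id p n j)
       \<and> I_pn p n = ideal_prod_upto (Q_id p n) p
       \<and> (\<forall>j<p. primary_for (Q_id p n j) (M_id p j))
       \<and> minimal_primary_decomposition (I_pn p n) (Q_id p n) {0..<p}
       \<and> (\<forall>j<p. maximal_ideal (M_id p j))
       \<and> radical ` Q_id p n ` {0..<p} = M_id p ` {0..<p}"
proof -
  have p0: "p > 0" using assms(1) prime_gt_0_nat by blast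
  have pn0: "p ^ n > 0" using p0 by simp
  have Ichar: "f \<in> I_pn p n \<longleftrightarrow> (\<forall>i<p ^ n. int (p ^ n) dvd poly f (int i))" for f
    using I_pn_iff[OF p0] all_iff_lt[OF pn0] by simp
  have e1: "I_pn p n = (\<Inter>i\<in>{0..<p ^ n}. ideal2 (int (p ^ n)) (int i))"
  proof (rule set_eqI)
    fix f show "f \<in> I_pn p n \<longleftrightarrow> f \<in> (\<Inter>i\<in>{0..<p ^ n}. ideal2 (int (p ^ n)) (int i))"
      unfolding Ichar by (auto simp: ideal2_iff)
  qed
  have e2: "I_pn p n = (\<Inter>j\<in>{0..<p}. Q_id p n j)"
  proof (rule set_eqI)
    fix f show "f \<in> I_pn p n \<longleftrightarrow> f \<in> (\<Inter>j\<in>{0..<p}. Q_id p n j)"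
    proof
      assume "f \<in> I_pn p n"
      then show "f \<in> (\<Inter>j\<in>{0..<p}. Q_id p n j)" unfolding Ichar by (simp add: Q_iff)
    next
      assume H: "f \<in> (\<Inter>j\<in>{0..<p}. Q_id p n j)"
      show "f \<in> I_pn p n" unfolding Ichar
      proof (intro allI impI)
        fix i assume i: "i < p ^ n"
        have "i mod p \<in> {0..<p}" using p0 by simp
        then have "f \<in> Q_id p n (i mod p)" using H by blast
        then show "int (p ^ n) dvd poly f (int i)" using i unfolding Q_iff by simp
      qed
    qed
  qed
  have e3: "I_pn p n = ideal_prod_upto (Q_id p n) p"
    using prod_upto[OF assms order_refl] e2 by (simp add: atLeast0LessThan)
  have e4: "\<forall>j<p. primary_for (Q_id p n j) (M_id p j)"
    using primary_Q assms by blast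
  have e6: "\<forall>j<p. maximal_ideal (M_id p j)" using maximal_M assms(1) by blast
  have rad: "radical (Q_id p n j) = M_id p j" if "j \<in> {0..<p}" for j
    using radical_Q assms that by simp
  have e7: "radical ` Q_id p n ` {0..<p} = M_id p ` {0..<p}"
    unfolding image_image using rad by (rule image_cong[OF refl])
  have e5: "minimal_primary_decomposition (I_pn p n) (Q_id p n) {0..<p}"
    unfolding minimal_primary_decomposition_def
  proof (intro conjI ballI impI)
    show "finite {0..<p}" by simp
    show "I_pn p n = (\<Inter>j\<in>{0..<p}. Q_id p n j)" by (rule e2)
  next
    fix j assume "j \<in> {0..<p}"
    then show "primary_ideal (Q_id p n j)" using e4 unfolding primary_for_def by simp
  next
    fix j k assume jk: "j \<in> {0..<p}" "k \<in> {0..<p}" "j \<noteq> k"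
    have "[:- int j, 1:] \<in> M_id p j" unfolding M_iff by simp
    moreover have "[:- int j, 1:] \<notin> M_id p k"
    proof
      assume "[:- int j, 1:] \<in> M_id p k"
      then have "int p dvd int k - int j" unfolding M_iff by simp
      then have "[int k = int j] (mod int p)" by (simp add: cong_iff_dvd_diff)
      then have "[k = j] (mod p)" by (simp add: cong_int_iff)
      then have "k mod p = j mod p" by (simp add: cong_def)
      then show False using jk by auto
    qed
    ultimately show "radical (Q_id p n j) \<noteq> radical (Q_id p n k)"
      using rad jk by auto
  next
    fix j assume j: "j \<in> {0..<p}"
    have "Pk p j ^ n \<in> (\<Inter>k\<in>{0..<p} - {j}. Q_id p n k)"
      using h_in_Q assms(1) j by auto
    moreover have "Pk p j ^ n \<notin> Q_id p n j" using h_notin_Q assms j by simp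
    ultimately show "\<not> (\<Inter>k\<in>{0..<p} - {j}. Q_id p n k) \<subseteq> Q_id p n j" by blast
  qed
  show ?thesis using e1 e2 e3 e4 e5 e6 e7 by blast
qed

end
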